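(* Let $I$ be a quasiconcave function satisfying $\int_0^t\frac{I(s)}{s}ds\lesssim I(t)$ for $t\in(0,1)$. Then $$(T_If)^{**}(t)\lesssim (T_If^{**})(t),\quad f\in\mathcal M_+(0,1),\ t\in(0,1).$$
   Context: A quasiconcave function is a nondecreasing bijection $I:(0,1)\to(0,1)$ with $I(0+)=0$, $I(1-)=1$ and $t\mapsto I(t)/t$ nonincreasing. $\mathcal M_+(0,1)$: nonnegative measurable functions; $f^*$: nonincreasing rearrangement; $f^{**}(t)=\frac1t\int_0^tf^*(s)ds$. $T_If(t)=\frac{I(t)}{t}\sup_{t\le s<1}\frac{s}{I(s)}f^*(s)$. $\lesssim$: up to a constant independent of $f,t$. *)

theory Defs
  imports "HOL-Analysis.Analysis"
begin

definition quasiconcave :: "(real \<Rightarrow> real) \<Rightarrow> bool" where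
  "quasiconcave I \<longleftrightarrow>
     bij_betw I {0<..<1} {0<..<1} \<and>
     mono_on {0<..<1} I \<and>
     (I \<longlongrightarrow> 0) (at_right 0) \<and>
     (I \<longlongrightarrow> 1) (at_left 1) \<and>
     (\<forall>s t. 0 < s \<and> s \<le> t \<and> t < 1 \<longrightarrow> I t / t \<le> I s / s)"

definition distr_fun :: "(real \<Rightarrow> ennreal) \<Rightarrow> ennreal \<Rightarrow> ennreal" where
  "distr_fun f y = emeasure lborel {x \<in> {0<..<1}. f x > y}"

definition rearr :: "(real \<Rightarrow> ennreal) \<Rightarrow> real \<Rightarrow> ennreal" where
  "rearr f t = Inf {y. distr_fun f y \<le> ennreal t}"

definition rearr2 :: "(real \<Rightarrow> ennreal) \<Rightarrow> real \<Rightarrow> ennreal" where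
  "rearr2 f t = (\<integral>\<^sup>+ s \<in> {0<..<t}. rearr f s \<partial>lborel) / ennreal t"

definition T_op :: "(real \<Rightarrow> real) \<Rightarrow> (real \<Rightarrow> ennreal) \<Rightarrow> real \<Rightarrow> ennreal" where
  "T_op I f t = ennreal (I t / t) * (SUP s \<in> {t..<1}. ennreal (s / I s) * rearr f s)"

end

theory Submission imports Defs begin

lemma rearr_antitone:
  assumes "s1 \<le> s2" shows "rearr f s2 \<le> rearr f s1"
  unfolding rearr_def
  by (rule Inf_superset_mono) (use assms ennreal_leI order_trans in blast)

lemma antitone_measurable:
  fixes g :: "real \<Rightarrow> ennreal"
  assumes "\<And>x y. x \<le> y \<Longrightarrow> g y \<le> g x"
  shows "g \<in> borel_measurable borel"
proof (rule borel_measurableI_greater)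
  fix y
  have "is_interval {x. y < g x}"
    unfolding is_interval_1 using assms by (metis mem_Collect_eq order_less_le_trans)
  then show "{x \<in> space borel. y < g x} \<in> sets borel"
    using real_interval_borel_measurable by simp
qed

lemma antitone_on_set_measurable:
  fixes h :: "real \<Rightarrow> ennreal"
  assumes "\<And>x y. 0 < x \<Longrightarrow> x \<le> y \<Longrightarrow> y < 1 \<Longrightarrow> h y \<le> h x"
  shows "{x \<in> {0<..<1}. y < h x} \<in> sets borel"
proof -
  have "is_interval {x \<in> {0<..<1}. y < h x}"
    unfolding is_interval_1 using assms
    by simp (metis order_less_le_trans order_le_less_trans)
  then show ?thesis using real_interval_borel_measurable by simp
qed

lemma rearr_le_self:
  fixes g :: "real \<Rightarrow> ennreal"
  assumes "\<And>x y. 0 < x \<Longrightarrow> x \<le> y \<Longrightarrow> y < 1 \<Longrightarrow> g y \<le> g x"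
    and "0 < s" "s < 1"
  shows "rearr g s \<le> g s"
proof -
  have sub: "{x \<in> {0<..<1}. g x > g s} \<subseteq> {0<..<s}"
    using assms by (auto simp: not_less[symmetric]) (meson not_le)
  have "distr_fun g (g s) \<le> emeasure lborel {0<..<s}"
    unfolding distr_fun_def by (rule emeasure_mono[OF sub]) simp
  also have "\<dots> = ennreal s" using assms by simp
  finally show ?thesis unfolding rearr_def by (intro Inf_lower) simp
qed

lemma rearr_ge:
  fixes h :: "real \<Rightarrow> ennreal"
  assumes mono: "\<And>x y. 0 < x \<Longrightarrow> x \<le> y \<Longrightarrow> y < 1 \<Longrightarrow> h y \<le> h x"
    and "0 < u" "u < u'" "u' < 1"
  shows "h u' \<le> rearr h u"
  unfolding rearr_def
proof (rule Inf_greatest)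
  fix y assume "y \<in> {y. distr_fun h y \<le> ennreal u}"
  then have y: "distr_fun h y \<le> ennreal u" by simp
  show "h u' \<le> y"
  proof (rule ccontr)
    assume "\<not> h u' \<le> y"
    then have lt: "y < h u'" by simp
    have sub: "{0<..u'} \<subseteq> {x \<in> {0<..<1}. y < h x}"
      using assms lt by auto (meson order_less_le_trans)
    have "ennreal u' = emeasure lborel {0<..u'}" using assms by simp
    also have "\<dots> \<le> distr_fun h y"
      unfolding distr_fun_def
      by (rule emeasure_mono[OF sub]) (use antitone_on_set_measurable[where y=y, OF mono] in simp)
    finally have "ennreal u' \<le> ennreal u" using y by simp
    then show False using assms by (simp add: ennreal_le_iff2)
  qed
qed

lemma div_ennreal_eq: "0 < x \<Longrightarrow> a / ennreal x = a * ennreal (1 / x)"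
  by (simp add: divide_ennreal_def inverse_ennreal divide_inverse)

lemma cross:
  fixes a b :: ennreal
  assumes "0 < x" "0 < y" "a * ennreal y \<le> b * ennreal x"
  shows "a / ennreal x \<le> b / ennreal y"
proof -
  have e1: "ennreal y * ennreal (1 / (x * y)) = ennreal (1 / x)"
    using assms by (simp add: ennreal_mult'[symmetric])
  have e2: "ennreal x * ennreal (1 / (x * y)) = ennreal (1 / y)"
    using assms by (simp add: ennreal_mult'[symmetric])
  have "a / ennreal x = a * ennreal y * ennreal (1 / (x * y))"
    using assms e1 by (simp add: div_ennreal_eq mult.assoc)
  also have "\<dots> \<le> b * ennreal x * ennreal (1 / (x * y))"
    using assms(3) by (rule mult_right_mono) simp
  also have "\<dots> = b / ennreal y"
    using assms e2 by (simp add: div_ennreal_eq mult.assoc)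
  finally show ?thesis .
qed

lemma nn_ind_const:
  assumes "a \<le> b"
  shows "(\<integral>\<^sup>+ s. c * indicator {a<..<b} s \<partial>lborel) = c * ennreal (b - a)"
  using assms by (simp add: nn_integral_cmult_indicator)

lemma rearr_meas: "rearr f \<in> borel_measurable borel"
  by (rule antitone_measurable) (rule rearr_antitone)

lemma F_mono:
  assumes "u \<le> u'"
  shows "(\<integral>\<^sup>+ s\<in>{0<..<u}. rearr f s \<partial>lborel) \<le> (\<integral>\<^sup>+ s\<in>{0<..<u'}. rearr f s \<partial>lborel)"
  by (rule nn_integral_mono) (use assms in \<open>auto intro!: mult_left_mono simp: indicator_def\<close>)

lemma rearr_le_rearr2:
  assumes "0 < u"
  shows "rearr f u \<le> rearr2 f u"
proof -
  have "rearr f u * ennreal u = (\<integral>\<^sup>+ s. rearr f u * indicator {0<..<u} s \<partial>lborel)"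
    using assms by (simp add: nn_ind_const)
  also have "\<dots> \<le> (\<integral>\<^sup>+ s\<in>{0<..<u}. rearr f s \<partial>lborel)"
    by (rule nn_integral_mono) (auto simp: indicator_def intro: rearr_antitone)
  finally have "rearr f u * ennreal u / ennreal u \<le> (\<integral>\<^sup>+ s\<in>{0<..<u}. rearr f s \<partial>lborel) / ennreal u"
    by (rule divide_right_mono_ennreal)
  then show ?thesis using assms by (simp add: rearr2_def ennreal_mult_divide_eq)
qed

lemma rearr2_antitone:
  assumes "0 < x" "x \<le> u"
  shows "rearr2 f u \<le> rearr2 f x"
proof -
  let ?F = "\<lambda>u. (\<integral>\<^sup>+ s\<in>{0<..<u}. rearr f s \<partial>lborel)"
  have split: "?F u = ?F x + (\<integral>\<^sup>+ s. rearr f s * indicator {x..<u} s \<partial>lborel)"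
  proof -
    have "?F u = (\<integral>\<^sup>+ s. rearr f s * indicator {0<..<x} s + rearr f s * indicator {x..<u} s \<partial>lborel)"
      by (rule nn_integral_cong) (use assms in \<open>auto simp: indicator_def\<close>)
    also have "\<dots> = ?F x + (\<integral>\<^sup>+ s. rearr f s * indicator {x..<u} s \<partial>lborel)"
      by (rule nn_integral_add) (use rearr_meas in auto)
    finally show ?thesis .
  qed
  have "(\<integral>\<^sup>+ s. rearr f s * indicator {x..<u} s \<partial>lborel) \<le> (\<integral>\<^sup>+ s. rearr f x * indicator {x..<u} s \<partial>lborel)"
    by (rule nn_integral_mono) (auto simp: indicator_def intro: rearr_antitone)
  also have "\<dots> = rearr f x * ennreal (u - x)"
    using assms by (simp add: nn_integral_cmult_indicator)
  finally have Fu: "?F u \<le> ?F x + rearr f x * ennreal (u - x)"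
    using split by (metis add_left_mono)
  have fx: "rearr f x * ennreal x \<le> ?F x"
  proof -
    have "rearr f x * ennreal x = (\<integral>\<^sup>+ s. rearr f x * indicator {0<..<x} s \<partial>lborel)"
      using assms by (simp add: nn_ind_const)
    also have "\<dots> \<le> ?F x"
      by (rule nn_integral_mono) (auto simp: indicator_def intro: rearr_antitone)
    finally show ?thesis .
  qed
  have "?F u * ennreal x \<le> (?F x + rearr f x * ennreal (u - x)) * ennreal x"
    using Fu by (rule mult_right_mono) simp
  also have "\<dots> = ?F x * ennreal x + (rearr f x * ennreal x) * ennreal (u - x)"
    by (simp only: distrib_right mult.assoc mult.commute[of "ennreal (u - x)"])
  also have "\<dots> \<le> ?F x * ennreal x + ?F x * ennreal (u - x)"
    using fx by (intro add_left_mono mult_right_mono) auto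
  also have "\<dots> = ?F x * ennreal u"
    using assms by (simp add: distrib_left[symmetric] ennreal_plus[symmetric])
  finally have "?F u / ennreal u \<le> ?F x / ennreal x"
    using assms by (intro cross) auto
  then show ?thesis by (simp add: rearr2_def)
qed

lemma rearr2_le_rearr:
  assumes "0 < u" "u < 1"
  shows "rearr2 f u \<le> 2 * rearr (rearr2 f) u"
proof -
  let ?F = "\<lambda>u. (\<integral>\<^sup>+ s\<in>{0<..<u}. rearr f s \<partial>lborel)"
  define u' where "u' = min (2 * u) ((1 + u) / 2)"
  have u': "u < u'" "u' < 1" "u' \<le> 2 * u" using assms unfolding u'_def by (auto simp: min_def)
  have "?F u * ennreal u' \<le> (2 * ?F u') * ennreal u"
  proof -
    have "?F u * ennreal u' \<le> ?F u' * ennreal (2 * u)"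
      using u' by (intro mult_mono F_mono ennreal_leI) auto
    also have "\<dots> = (2 * ?F u') * ennreal u"
    proof -
      have "ennreal (2 * u) = 2 * ennreal u"
        using assms ennreal_mult[of 2 u] by simp
      then show ?thesis by (simp add: mult_ac)
    qed
    finally show ?thesis .
  qed
  then have "rearr2 f u \<le> (2 * ?F u') / ennreal u'"
    unfolding rearr2_def using assms u' by (intro cross) auto
  also have "\<dots> = 2 * rearr2 f u'"
    by (simp add: rearr2_def ennreal_times_divide)
  also have "\<dots> \<le> 2 * rearr (rearr2 f) u"
    using assms u' by (intro mult_left_mono rearr_ge rearr2_antitone) auto
  finally show ?thesis .
qed

theorem theorem3p12:
  fixes I :: "real \<Rightarrow> real"
  assumes "quasiconcave I"
    and "\<exists>C. \<forall>t\<in>{0<..<1}.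
           (\<integral>\<^sup>+ s \<in> {0<..<t}. ennreal (I s / s) \<partial>lborel) \<le> ennreal (C * I t)"
  shows "\<exists>C. \<forall>f :: real \<Rightarrow> ennreal. f \<in> borel_measurable (restrict_space lborel {0<..<1}) \<longrightarrow>
           (\<forall>t\<in>{0<..<1}. rearr2 (T_op I f) t \<le> ennreal C * T_op I (rearr2 f) t)"
proof -
  obtain C0 where C0: "\<forall>t\<in>{0<..<1}.
           (\<integral>\<^sup>+ s \<in> {0<..<t}. ennreal (I s / s) \<partial>lborel) \<le> ennreal (C0 * I t)"
    using assms(2) by blast
  define C1 where "C1 = max C0 0"
  have C1: "C1 \<ge> 0" by (simp add: C1_def)
  have Q: "bij_betw I {0<..<1} {0<..<1}" "mono_on {0<..<1} I"
    "\<And>s t. 0 < s \<Longrightarrow> s \<le> t \<Longrightarrow> t < 1 \<Longrightarrow> I t / t \<le> I s / s"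
    using assms(1) unfolding quasiconcave_def by auto
  have Ipos: "0 < I x" "I x < 1" if "0 < x" "x < 1" for x
    using Q(1) that unfolding bij_betw_def by auto
  have Imono: "I x \<le> I y" if "0 < x" "x \<le> y" "y < 1" for x y
    using Q(2) that by (auto simp: mono_on_def)
  have hyp: "(\<integral>\<^sup>+ s \<in> {0<..<t}. ennreal (I s / s) \<partial>lborel) \<le> ennreal (C1 * I t)"
    if "0 < t" "t < 1" for t
  proof -
    have "C0 * I t \<le> C1 * I t" using Ipos[OF that] by (intro mult_right_mono) (auto simp: C1_def)
    then show ?thesis using C0 that by (meson ennreal_leI greaterThanLessThan_iff order_trans)
  qed
  define Ie where "Ie x = (if x \<le> 0 then 0 else if x < 1 then I x else 1)" for x
  have Ie_eq: "Ie x = I x" if "0 < x" "x < 1" for x using that by (simp add: Ie_def)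
  have "mono Ie"
    unfolding mono_def Ie_def using Ipos Imono by (auto simp: less_imp_le) 
  then have Ie_meas[measurable]: "Ie \<in> borel_measurable borel" by (rule borel_measurable_mono)
  show ?thesis
  proof (intro exI allI impI ballI)
    fix f :: "real \<Rightarrow> ennreal" and t :: real
    assume "t \<in> {0<..<1}"
    then have t: "0 < t" "t < 1" by auto
    define fs where "fs = rearr f"
    have fs_meas[measurable]: "fs \<in> borel_measurable borel" unfolding fs_def by (rule rearr_meas)
    have fs_anti: "fs y \<le> fs x" if "x \<le> y" for x y unfolding fs_def using that by (rule rearr_antitone)
    define h where "h = rearr2 f"
    define phi where "phi u = ennreal (u / I u) * fs u" for u
    define G where "G s = (SUP u\<in>{s..<1}. phi u)" for s
    define g where "g = T_op I f"
    have g_eq: "g s = ennreal (I s / s) * G s" for s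
      by (simp add: g_def T_op_def G_def phi_def fs_def)
    define Th where "Th = T_op I h t"
    have Th_eq: "Th = ennreal (I t / t) * (SUP u\<in>{t..<1}. ennreal (u / I u) * rearr h u)"
      by (simp add: Th_def T_op_def)
    define F where "F = (\<integral>\<^sup>+ s\<in>{0<..<t}. fs s \<partial>lborel)"
    have hF: "h t = F / ennreal t" by (simp add: h_def F_def rearr2_def fs_def)
    have a: "rearr h t \<le> Th"
    proof -
      have "ennreal (I t / t) * (ennreal (t / I t) * rearr h t) \<le> Th"
        unfolding Th_eq by (intro mult_left_mono SUP_upper) (use t in auto)
      moreover have "ennreal (I t / t) * ennreal (t / I t) = 1"
        using t Ipos[OF t] by (simp add: ennreal_mult[symmetric])
      ultimately show ?thesis by (simp add: mult.assoc[symmetric])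
    qed
    have b: "g t \<le> 2 * Th"
    proof -
      have "G t \<le> 2 * (SUP u\<in>{t..<1}. ennreal (u / I u) * rearr h u)"
        unfolding G_def
      proof (rule SUP_least)
        fix u assume u: "u \<in> {t..<1}"
        have "fs u \<le> 2 * rearr h u"
          using rearr_le_rearr2[of u f] rearr2_le_rearr[of u f] u t
          by (auto simp: fs_def h_def)
        then have "phi u \<le> ennreal (u / I u) * (2 * rearr h u)"
          unfolding phi_def by (rule mult_left_mono) simp
        also have "\<dots> = 2 * (ennreal (u / I u) * rearr h u)" by (simp add: mult_ac)
        also have "\<dots> \<le> 2 * (SUP u\<in>{t..<1}. ennreal (u / I u) * rearr h u)"
          by (intro mult_left_mono SUP_upper u) simp
        finally show "phi u \<le> \<dots>" .
      qed
      then have "g t \<le> ennreal (I t / t) * (2 * (SUP u\<in>{t..<1}. ennreal (u / I u) * rearr h u))"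
        unfolding g_eq by (rule mult_left_mono) simp
      then show ?thesis unfolding Th_eq by (simp add: mult_ac)
    qed
    have c: "h t \<le> 2 * Th"
      using rearr2_le_rearr[of t f] t a unfolding h_def
      by (metis (no_types) h_def mult_left_mono order_trans zero_le)
    have g_anti: "g y \<le> g x" if "0 < x" "x \<le> y" "y < 1" for x y
    proof -
      have "ennreal (I y / y) \<le> ennreal (I x / x)" using Q(3)[OF that] by (rule ennreal_leI)
      moreover have "G y \<le> G x" unfolding G_def by (rule SUP_subset_mono) (use that in auto)
      ultimately show ?thesis unfolding g_eq by (rule mult_mono) auto
    qed
    have e: "rearr2 g t \<le> (\<integral>\<^sup>+ s. g s * indicator {0<..<t} s \<partial>lborel) / ennreal t"
      unfolding rearr2_def
    proof (intro divide_right_mono_ennreal nn_integral_mono)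
      fix x
      show "rearr g x * indicator {0<..<t} x \<le> g x * indicator {0<..<t} x"
      proof (cases "0 < x \<and> x < t")
        case True
        then have "rearr g x \<le> g x" using t by (intro rearr_le_self g_anti) auto
        then show ?thesis by (simp add: mult_right_mono)
      qed (auto simp: indicator_def)
    qed
    define K where "K s r = (if 0 < s \<and> s < t \<and> s/2 < r \<and> r < t
       then ennreal (Ie s / s) * (ennreal (1 / Ie r) * fs r) else 0)" for s r
    have K_meas: "(\<lambda>(s,r). K s r) \<in> borel_measurable (lborel \<Otimes>\<^sub>M lborel)"
      unfolding K_def by measurable
    have pw: "g s * indicator {0<..<t} s \<le>
        (ennreal (Ie s / s) * indicator {0<..<t} s) * G t + 2 * (\<integral>\<^sup>+ r. K s r \<partial>lborel)" for s
    proof (cases "0 < s \<and> s < t")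
      case False then show ?thesis by (auto simp: indicator_def)
    next
      case True
      then have s: "0 < s" "s < t" "s < 1" using t by auto
      have "g s = (SUP u\<in>{s..<1}. ennreal (I s / s) * phi u)"
        unfolding g_eq G_def by (rule SUP_mult_left_ennreal)
      also have "\<dots> \<le> ennreal (I s / s) * G t + 2 * (\<integral>\<^sup>+ r. K s r \<partial>lborel)"
      proof (rule SUP_least)
        fix u assume u: "u \<in> {s..<1}"
        show "ennreal (I s / s) * phi u \<le> ennreal (I s / s) * G t + 2 * (\<integral>\<^sup>+ r. K s r \<partial>lborel)"
        proof (cases "t \<le> u")
          case True
          then have "ennreal (I s / s) * phi u \<le> ennreal (I s / s) * G t"
            unfolding G_def using u by (intro mult_left_mono SUP_upper) auto
          then show ?thesis by (simp add: add_increasing2)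
        next
          case False
          then have u2: "s \<le> u" "u < t" "0 < u" "u < 1" using u s by auto
          have Iu: "0 < I u" using Ipos u2 by auto
          have "(\<integral>\<^sup>+ r. (ennreal (I s / s) * ennreal (1 / I u) * fs u) * indicator {u/2<..<u} r \<partial>lborel)
                \<le> (\<integral>\<^sup>+ r. K s r \<partial>lborel)"
          proof (rule nn_integral_mono)
            fix r
            show "(ennreal (I s / s) * ennreal (1 / I u) * fs u) * indicator {u/2<..<u} r \<le> K s r"
            proof (cases "u/2 < r \<and> r < u")
              case False then show ?thesis by (auto simp: indicator_def)
            next
              case True
              then have r: "0 < r" "r < u" "s/2 < r" "r < t" "r < 1" using u2 by auto
              have "1 / I u \<le> 1 / I r"
                using Ipos[of r] r Imono[of r u] u2 by (intro divide_left_mono) auto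
              then have "ennreal (1 / I u) * fs u \<le> ennreal (1 / Ie r) * fs r"
                using r Ie_eq[of r] by (intro mult_mono ennreal_leI fs_anti) auto
              then show ?thesis
                using True r s Ie_eq[of s] unfolding K_def
                by (simp add: indicator_def mult.assoc mult_left_mono)
            qed
          qed
          moreover have "(\<integral>\<^sup>+ r. (ennreal (I s / s) * ennreal (1 / I u) * fs u) * indicator {u/2<..<u} r \<partial>lborel)
              = (ennreal (I s / s) * ennreal (1 / I u) * fs u) * ennreal (u / 2)"
            using u2 by (subst nn_ind_const) auto
          ultimately have "2 * ((ennreal (I s / s) * ennreal (1 / I u) * fs u) * ennreal (u / 2))
              \<le> 2 * (\<integral>\<^sup>+ r. K s r \<partial>lborel)" by (metis mult_left_mono zero_le)
          moreover have "2 * ((ennreal (I s / s) * ennreal (1 / I u) * fs u) * ennreal (u / 2))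
              = ennreal (I s / s) * phi u"
          proof -
            have "2 * ennreal (u / 2) * ennreal (1 / I u) = ennreal (u / I u)"
            proof -
              have "2 * ennreal (u / 2) = ennreal u"
                using u2 ennreal_mult[of 2 "u/2"] by simp
              moreover have "ennreal u * ennreal (1 / I u) = ennreal (u / I u)"
                using u2 Iu by (simp add: ennreal_mult[symmetric])
              ultimately show ?thesis by simp
            qed
            then show ?thesis unfolding phi_def by (metis (no_types, lifting) mult.assoc mult.commute)
          qed
          ultimately show ?thesis by (simp add: add_increasing)
        qed
      qed
      finally show ?thesis using s Ie_eq[of s] by (simp add: indicator_def)
    qed
    have Kr: "(\<integral>\<^sup>+ s. K s r \<partial>lborel) \<le> ennreal (2 * C1) * (fs r * indicator {0<..<t} r)" for r
    proof (cases "0 < r \<and> r < t")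
      case False
      then have "K s r = 0" for s unfolding K_def by auto
      then show ?thesis by simp
    next
      case True
      then have r: "0 < r" "r < t" "r < 1" using t by auto
      define m where "m = min (2 * r) t"
      have m: "0 < m" "m < 1" "r \<le> m" "m \<le> 2 * r" using r t by (auto simp: m_def)
      have Ir: "0 < I r" using Ipos r by auto
      have "K s r = (ennreal (1 / Ie r) * fs r) * (ennreal (Ie s / s) * indicator {0<..<m} s)" for s
        unfolding K_def m_def using r by (auto simp: indicator_def mult_ac)
      then have "(\<integral>\<^sup>+ s. K s r \<partial>lborel) = (ennreal (1 / Ie r) * fs r) * (\<integral>\<^sup>+ s. ennreal (Ie s / s) * indicator {0<..<m} s \<partial>lborel)"
        by (simp add: nn_integral_cmult)
      also have "(\<integral>\<^sup>+ s. ennreal (Ie s / s) * indicator {0<..<m} s \<partial>lborel) = (\<integral>\<^sup>+ s\<in>{0<..<m}. ennreal (I s / s) \<partial>lborel)"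
        by (rule nn_integral_cong) (use m Ie_eq in \<open>auto simp: indicator_def\<close>)
      also have "\<dots> \<le> ennreal (C1 * I m)" using hyp m by auto
      finally have 1: "(\<integral>\<^sup>+ s. K s r \<partial>lborel) \<le> (ennreal (1 / I r) * fs r) * ennreal (C1 * I m)"
        using Ie_eq r by (simp add: mult_left_mono)
      have "I m / m \<le> I r / r" using Q(3) m r by auto
      then have "I m \<le> m * (I r / r)" using m by (simp add: field_simps)
      also have "\<dots> \<le> 2 * r * (I r / r)" using m Ir r by (intro mult_right_mono) auto
      finally have Im: "I m \<le> 2 * I r" using r by simp
      have "ennreal (1 / I r) * ennreal (C1 * I m) = ennreal (C1 * I m / I r)"
      proof -
        have "0 \<le> C1 * I m" using C1 Ipos[OF m(1,2)] by simp
        then have "ennreal (1 / I r) * ennreal (C1 * I m) = ennreal (1 / I r * (C1 * I m))"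
          using Ir by (subst ennreal_mult) auto
        then show ?thesis by simp
      qed
      also have "\<dots> \<le> ennreal (2 * C1)"
        using Ir C1 Im by (intro ennreal_leI) (simp add: field_simps mult_left_mono)
      finally have "(ennreal (1 / I r) * fs r) * ennreal (C1 * I m) \<le> ennreal (2 * C1) * fs r"
        by (metis (no_types, lifting) mult.assoc mult.commute mult_left_mono zero_le)
      with 1 r show ?thesis by (simp add: indicator_def)
    qed
    have Kint: "(\<integral>\<^sup>+ s. (\<integral>\<^sup>+ r. K s r \<partial>lborel) \<partial>lborel) \<le> ennreal (2 * C1) * F"
    proof -
      have "(\<integral>\<^sup>+ s. (\<integral>\<^sup>+ r. K s r \<partial>lborel) \<partial>lborel) = (\<integral>\<^sup>+ r. (\<integral>\<^sup>+ s. K s r \<partial>lborel) \<partial>lborel)"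
        using lborel_pair.Fubini'[OF K_meas] by simp
      also have "\<dots> \<le> (\<integral>\<^sup>+ r. ennreal (2 * C1) * (fs r * indicator {0<..<t} r) \<partial>lborel)"
        by (rule nn_integral_mono) (rule Kr)
      also have "\<dots> = ennreal (2 * C1) * F"
        unfolding F_def by (rule nn_integral_cmult) measurable
      finally show ?thesis .
    qed
    have first: "(\<integral>\<^sup>+ s. ennreal (Ie s / s) * indicator {0<..<t} s \<partial>lborel) \<le> ennreal (C1 * I t)"
    proof -
      have "(\<integral>\<^sup>+ s. ennreal (Ie s / s) * indicator {0<..<t} s \<partial>lborel) = (\<integral>\<^sup>+ s\<in>{0<..<t}. ennreal (I s / s) \<partial>lborel)"
        by (rule nn_integral_cong) (use t Ie_eq in \<open>auto simp: indicator_def\<close>)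
      then show ?thesis using hyp t by simp
    qed
    have K_meas'[measurable]: "(\<lambda>x. K (fst x) (snd x)) \<in> borel_measurable (lborel \<Otimes>\<^sub>M lborel)"
      using K_meas by (simp add: case_prod_beta')
    have tot: "(\<integral>\<^sup>+ s. g s * indicator {0<..<t} s \<partial>lborel) \<le> ennreal (C1 * I t) * G t + 2 * (ennreal (2 * C1) * F)"
    proof -
      have "(\<integral>\<^sup>+ s. g s * indicator {0<..<t} s \<partial>lborel) \<le>
          (\<integral>\<^sup>+ s. (ennreal (Ie s / s) * indicator {0<..<t} s) * G t + 2 * (\<integral>\<^sup>+ r. K s r \<partial>lborel) \<partial>lborel)"
        by (rule nn_integral_mono) (rule pw)
      also have "\<dots> = (\<integral>\<^sup>+ s. ennreal (Ie s / s) * indicator {0<..<t} s \<partial>lborel) * G t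
          + 2 * (\<integral>\<^sup>+ s. (\<integral>\<^sup>+ r. K s r \<partial>lborel) \<partial>lborel)"
        by (subst nn_integral_add) (auto simp: nn_integral_multc nn_integral_cmult)
      also have "\<dots> \<le> ennreal (C1 * I t) * G t + 2 * (ennreal (2 * C1) * F)"
        using first Kint by (intro add_mono mult_right_mono mult_left_mono) auto
      finally show ?thesis .
    qed
    have "rearr2 g t \<le> (ennreal (C1 * I t) * G t + 2 * (ennreal (2 * C1) * F)) / ennreal t"
      using e tot by (meson divide_right_mono_ennreal order_trans)
    also have "\<dots> = ennreal C1 * g t + ennreal (4 * C1) * h t"
    proof -
      have "ennreal (C1 * I t) * G t / ennreal t = ennreal C1 * g t"
      proof -
        have "ennreal (C1 * I t) * ennreal (1 / t) = ennreal C1 * ennreal (I t / t)"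
          using t C1 Ipos[OF t] by (simp add: ennreal_mult[symmetric])
        then show ?thesis using t unfolding g_eq
          by (simp add: div_ennreal_eq mult_ac)
      qed
      moreover have "2 * (ennreal (2 * C1) * F) / ennreal t = ennreal (4 * C1) * h t"
      proof -
        have "2 * ennreal (2 * C1) = ennreal (4 * C1)"
          using C1 ennreal_mult[of 2 "2 * C1"] by simp
        then show ?thesis unfolding hF by (simp add: ennreal_times_divide mult.assoc[symmetric])
      qed
      ultimately show ?thesis by (simp add: add_divide_distrib_ennreal)
    qed
    also have "\<dots> \<le> ennreal C1 * (2 * Th) + ennreal (4 * C1) * (2 * Th)"
      using b c by (intro add_mono mult_left_mono) auto
    also have "\<dots> = ennreal (10 * C1) * Th"
    proof -
      have "ennreal C1 * 2 + ennreal (4 * C1) * 2 = ennreal (10 * C1)"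
      proof -
        have "ennreal C1 * 2 = ennreal (C1 * 2)" using C1 ennreal_mult[of C1 2] by simp
        moreover have "ennreal (4 * C1) * 2 = ennreal (4 * C1 * 2)" using C1 ennreal_mult[of "4 * C1" 2] by simp
        moreover have "ennreal (C1 * 2) + ennreal (4 * C1 * 2) = ennreal (10 * C1)"
          using C1 by (subst ennreal_plus[symmetric]) auto
        ultimately show ?thesis by simp
      qed
      then show ?thesis by (metis distrib_right mult.assoc mult.commute)
    qed
    finally show "rearr2 (T_op I f) t \<le> ennreal (10 * C1) * T_op I (rearr2 f) t"
      by (simp add: g_def Th_def h_def)
  qed
qed

end
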